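(* Let $\alpha\in(0,1)$, $\beta\in[0,1]$ irrational and $\eta>0$. Then $$\dim_{\mathcal H}\Big(\limsup_{n\to\infty}A_{n,1,\eta}\Big)=0,$$ where $A_{n,1,\eta}=\{x\in[0,1]:\ln(n)\cdot v_{n,1}(x)>\eta\}$ and $\limsup_nA_n=\bigcap_N\bigcup_{n\ge N}A_n$.
   Context: $T_1$ is the Farey map ($T_1(x)=\frac x{1-x}$ for $x\le1/2$, $\frac{1-x}x$ for $x>1/2$) with inverse branches $f_{1,0}(x)=\frac x{1+x}$, $f_{1,1}(x)=\frac1{1+x}$; for $\varphi\in\{0,1\}^n$, $f_{1,\varphi}=f_{1,\varphi_1}\circ\dots\circ f_{1,\varphi_n}$. Itinerary: $\omega_{1,k}(\beta)=0$ if $T_1^{k-1}(\beta)\le1/2$, else $1$; $\omega_1(\beta)|_n=(\omega_{1,1}(\beta),\dots,\omega_{1,n}(\beta))$. With $v_{\beta,\alpha}(x)=|x-\beta|^{-\alpha}$, the $1$-tail is $v_{n,1}(x)=|f_{1,\omega_1(\beta)|_n}'(x)|\cdot v_{\beta,\alpha}(f_{1,\omega_1(\beta)|_n}(x))$. $\dim_{\mathcal H}$ denotes Hausdorff dimension. *)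

theory Defs
  imports "HOL-Analysis.Analysis" "HOL-Library.Extended_Real"
begin

text \<open>Contribution of a single covering set to the s-dimensional sum,
  with the usual conventions: the empty set contributes 0 and (diam U)^0 = 1.\<close>
definition hd_term :: "real \<Rightarrow> 'a::metric_space set \<Rightarrow> ennreal" where
  "hd_term s U = (if U = {} then 0 else if s = 0 then 1 else ennreal (diameter U powr s))"

definition hausdorff_pre :: "real \<Rightarrow> real \<Rightarrow> 'a::metric_space set \<Rightarrow> ennreal" where
  "hausdorff_pre s \<delta> A =
     (INF U \<in> {U :: nat \<Rightarrow> 'a set. A \<subseteq> (\<Union>i. U i) \<and> (\<forall>i. bounded (U i) \<and> diameter (U i) \<le> \<delta>)}.
        (\<Sum>i. hd_term s (U i)))"

definition hausdorff_measure :: "real \<Rightarrow> 'a::metric_space set \<Rightarrow> ennreal" where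
  "hausdorff_measure s A = (SUP \<delta> \<in> {0<..}. hausdorff_pre s \<delta> A)"

definition hausdorff_dim :: "'a::metric_space set \<Rightarrow> real" where
  "hausdorff_dim A = Inf {s. 0 \<le> s \<and> hausdorff_measure s A = 0}"

definition farey_T :: "real \<Rightarrow> real" where
  "farey_T x = (if x \<le> 1/2 then x / (1 - x) else (1 - x) / x)"

definition farey_branch :: "nat \<Rightarrow> real \<Rightarrow> real" where
  "farey_branch j x = (if j = 0 then x / (1 + x) else 1 / (1 + x))"

text \<open>k-th itinerary digit, k >= 1: omega_{1,k}(beta).\<close>
definition farey_digit :: "real \<Rightarrow> nat \<Rightarrow> nat" where
  "farey_digit \<beta> k = (if (farey_T ^^ (k - 1)) \<beta> \<le> 1/2 then 0 else 1)"

text \<open>f_{1,omega_1(beta)|_n} = f_{omega_1} o ... o f_{omega_n}.\<close>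
fun farey_word :: "real \<Rightarrow> nat \<Rightarrow> real \<Rightarrow> real" where
  "farey_word \<beta> 0 = id"
| "farey_word \<beta> (Suc n) = farey_word \<beta> n \<circ> farey_branch (farey_digit \<beta> (Suc n))"

definition v_pot :: "real \<Rightarrow> real \<Rightarrow> real \<Rightarrow> ereal" where
  "v_pot \<beta> \<alpha> x = (if x = \<beta> then \<infinity> else ereal (\<bar>x - \<beta>\<bar> powr (- \<alpha>)))"

definition v_tail :: "real \<Rightarrow> real \<Rightarrow> nat \<Rightarrow> real \<Rightarrow> ereal" where
  "v_tail \<beta> \<alpha> n x = ereal \<bar>deriv (farey_word \<beta> n) x\<bar> * v_pot \<beta> \<alpha> (farey_word \<beta> n x)"

definition A_set :: "real \<Rightarrow> real \<Rightarrow> real \<Rightarrow> nat \<Rightarrow> real set" where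
  "A_set \<beta> \<alpha> \<eta> n = {x \<in> {0..1}. ereal (ln (real n)) * v_tail \<beta> \<alpha> n x > ereal \<eta>}"

end

theory Submission
  imports Defs
begin

fun QQ :: "real \<Rightarrow> nat \<Rightarrow> real \<Rightarrow> real" where
  "QQ \<beta> 0 x = 1"
| "QQ \<beta> (Suc n) x = (1 + x) * QQ \<beta> n (farey_branch (farey_digit \<beta> (Suc n)) x)"

lemma branch_range: "x \<in> {0..1} \<Longrightarrow> farey_branch j x \<in> {0..1}"
  by (auto simp: farey_branch_def field_simps)

lemma QQ_affine:
  "\<exists>c d. 0 \<le> c \<and> 1 \<le> d \<and> real n + 1 \<le> c + d \<and> (\<forall>x\<ge>0. QQ \<beta> n x = d + c * x)"
proof (induction n)
  case 0
  then show ?case by (intro exI[of _ 0] exI[of _ 1]) auto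
next
  case (Suc n)
  then obtain c d where cd: "0 \<le> c" "1 \<le> d" "real n + 1 \<le> c + d" "\<forall>x\<ge>0. QQ \<beta> n x = d + c * x"
    by blast
  show ?case
  proof (cases "farey_digit \<beta> (Suc n) = 0")
    case True
    have eq: "\<forall>x\<ge>0. QQ \<beta> (Suc n) x = d + (c + d) * x"
    proof (intro allI impI)
      fix x :: real assume x: "0 \<le> x"
      have "x / (1 + x) \<ge> 0" using x by simp
      then have "QQ \<beta> (Suc n) x = (1 + x) * (d + c * (x / (1 + x)))"
        using True cd(4) by (simp add: farey_branch_def)
      also have "\<dots> = d + (c + d) * x" using x by (simp add: field_simps)
      finally show "QQ \<beta> (Suc n) x = d + (c + d) * x" .
    qed
    show ?thesis
      by (rule exI[of _ "c + d"], rule exI[of _ d]) (use cd eq in auto)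
  next
    case False
    have eq: "\<forall>x\<ge>0. QQ \<beta> (Suc n) x = (c + d) + d * x"
    proof (intro allI impI)
      fix x :: real assume x: "0 \<le> x"
      have "1 / (1 + x) \<ge> 0" using x by simp
      then have "QQ \<beta> (Suc n) x = (1 + x) * (d + c * (1 / (1 + x)))"
        using False cd(4) by (simp add: farey_branch_def)
      also have "\<dots> = (c + d) + d * x" using x by (simp add: field_simps)
      finally show "QQ \<beta> (Suc n) x = (c + d) + d * x" .
    qed
    show ?thesis
      by (rule exI[of _ d], rule exI[of _ "c + d"]) (use cd eq in auto)
  qed
qed

lemma QQ_ge1: "0 \<le> x \<Longrightarrow> QQ \<beta> n x \<ge> 1"
proof -
  assume x: "0 \<le> x"
  obtain c d where cd: "0 \<le> c" "1 \<le> d" "\<forall>x\<ge>0. QQ \<beta> n x = d + c * x"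
    using QQ_affine by blast
  show ?thesis using cd x by (simp add: add_increasing2)
qed

lemma QQ_le1: "x \<in> {0..1} \<Longrightarrow> QQ \<beta> n x \<le> QQ \<beta> n 1"
proof -
  assume x: "x \<in> {0..1}"
  obtain c d where cd: "0 \<le> c" "1 \<le> d" "\<forall>x\<ge>0. QQ \<beta> n x = d + c * x"
    using QQ_affine by blast
  show ?thesis using cd x by (simp add: mult_left_le)
qed

lemma QQ_lin: "x \<in> {0..1} \<Longrightarrow> QQ \<beta> n 1 * x \<le> QQ \<beta> n x"
proof -
  assume x: "x \<in> {0..1}"
  obtain c d where cd: "0 \<le> c" "1 \<le> d" "\<forall>x\<ge>0. QQ \<beta> n x = d + c * x"
    using QQ_affine by blast
  have "d * x \<le> d" using x cd by (simp add: mult_left_le)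
  then show ?thesis using cd x by (simp add: algebra_simps)
qed

lemma QQ_one: "QQ \<beta> n 1 \<ge> real n + 1"
proof -
  obtain c d where cd: "0 \<le> c" "1 \<le> d" "real n + 1 \<le> c + d" "\<forall>x\<ge>0. QQ \<beta> n x = d + c * x"
    using QQ_affine by blast
  show ?thesis using cd by simp
qed

lemma fw_dist:
  "x \<in> {0..1} \<Longrightarrow> y \<in> {0..1} \<Longrightarrow>
   \<bar>farey_word \<beta> n x - farey_word \<beta> n y\<bar> = \<bar>x - y\<bar> / (QQ \<beta> n x * QQ \<beta> n y)"
proof (induction n arbitrary: x y)
  case 0
  then show ?case by simp
next
  case (Suc n)
  let ?b = "farey_branch (farey_digit \<beta> (Suc n))"
  have bx: "?b x \<in> {0..1}" "?b y \<in> {0..1}" using Suc.prems branch_range by auto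
  have IH: "\<bar>farey_word \<beta> n (?b x) - farey_word \<beta> n (?b y)\<bar> = \<bar>?b x - ?b y\<bar> / (QQ \<beta> n (?b x) * QQ \<beta> n (?b y))"
    using Suc.IH[OF bx] .
  have bd: "\<bar>?b x - ?b y\<bar> = \<bar>x - y\<bar> / ((1 + x) * (1 + y))"
    using Suc.prems by (auto simp: farey_branch_def field_simps abs_div abs_minus_commute)
  have q1: "QQ \<beta> n (?b x) > 0" "QQ \<beta> n (?b y) > 0"
    using QQ_ge1[of "?b x"] QQ_ge1[of "?b y"] bx by (auto intro: less_le_trans[OF zero_less_one])
  show ?case using IH bd Suc.prems q1 by (simp add: field_simps)
qed

lemma branch_deriv:
  assumes "x > -1"
  shows "(farey_branch j has_real_derivative (if j = 0 then 1 / (1 + x)^2 else - 1 / (1 + x)^2)) (at x)"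
proof (cases "j = 0")
  case True
  have e: "farey_branch j = (\<lambda>x. x / (1 + x))" using True by (auto simp: farey_branch_def)
  have "((\<lambda>x. x / (1 + x)) has_real_derivative 1 / (1 + x)^2) (at x)"
    using assms by (auto intro!: derivative_eq_intros simp: field_simps power2_eq_square)
  then show ?thesis using True e by simp
next
  case False
  have e: "farey_branch j = (\<lambda>x. 1 / (1 + x))" using False by (auto simp: farey_branch_def)
  have "((\<lambda>x. 1 / (1 + x)) has_real_derivative - 1 / (1 + x)^2) (at x)"
    using assms by (auto intro!: derivative_eq_intros simp: field_simps power2_eq_square)
  then show ?thesis using False e by simp
qed

lemma fw_deriv:
  "x \<in> {0..1} \<Longrightarrow> \<exists>D. (farey_word \<beta> n has_real_derivative D) (at x) \<and> \<bar>D\<bar> = 1 / (QQ \<beta> n x)^2"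
proof (induction n arbitrary: x)
  case 0
  then show ?case by (auto intro!: exI[of _ 1] simp: id_def)
next
  case (Suc n)
  let ?j = "farey_digit \<beta> (Suc n)"
  let ?b = "farey_branch ?j"
  have bx: "?b x \<in> {0..1}" using Suc.prems branch_range by auto
  obtain D where D: "(farey_word \<beta> n has_real_derivative D) (at (?b x))" "\<bar>D\<bar> = 1 / (QQ \<beta> n (?b x))^2"
    using Suc.IH[OF bx] by blast
  have xb: "x > -1" using Suc.prems by auto
  have "(farey_word \<beta> n \<circ> ?b has_real_derivative D * (if ?j = 0 then 1 / (1 + x)^2 else - 1 / (1 + x)^2)) (at x)"
    by (rule DERIV_chain[OF D(1) branch_deriv[OF xb]])
  moreover have "\<bar>D * (if ?j = 0 then 1 / (1 + x)^2 else - 1 / (1 + x)^2)\<bar> = 1 / (QQ \<beta> (Suc n) x)^2"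
    using D(2) xb QQ_ge1[of "?b x" \<beta> n] bx by (simp add: abs_mult power_mult_distrib)
  ultimately show ?case unfolding farey_word.simps by blast
qed

lemma T_props:
  assumes "y \<in> {0..1}"
  shows "farey_T y \<in> {0..1}" "farey_branch (if y \<le> 1/2 then 0 else 1) (farey_T y) = y"
    "0 \<le> th \<Longrightarrow> th \<le> y \<Longrightarrow> y \<le> 1 - th \<Longrightarrow> farey_T y \<ge> th"
proof -
  show "farey_T y \<in> {0..1}" using assms by (auto simp: farey_T_def field_simps)
  show "farey_branch (if y \<le> 1/2 then 0 else 1) (farey_T y) = y"
    using assms by (auto simp: farey_T_def farey_branch_def field_simps)
  assume th: "0 \<le> th" "th \<le> y" "y \<le> 1 - th"
  show "farey_T y \<ge> th"
  proof (cases "y \<le> 1/2")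
    case True
    then have "y \<le> y / (1 - y)" using assms by (auto simp: field_simps mult_left_le)
    then show ?thesis using True th by (simp add: farey_T_def)
  next
    case False
    have "0 \<le> (y - 1)^2" by simp
    then have "1 - y \<le> (1 - y) / y" using assms False by (auto simp: field_simps power2_eq_square)
    then show ?thesis using False th by (simp add: farey_T_def)
  qed
qed

definition xs :: "real \<Rightarrow> nat \<Rightarrow> real" where "xs \<beta> n = (farey_T ^^ n) \<beta>"

lemma digit_xs: "farey_digit \<beta> (Suc n) = (if xs \<beta> n \<le> 1/2 then 0 else 1)"
  by (simp add: farey_digit_def xs_def)

lemma xs_range: "\<beta> \<in> {0..1} \<Longrightarrow> xs \<beta> n \<in> {0..1}"
proof (induction n)
  case (Suc n)
  then show ?case using T_props(1)[of "xs \<beta> n"] by (simp add: xs_def)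
qed (simp add: xs_def)

lemma xs_Suc: "xs \<beta> (Suc n) = farey_T (xs \<beta> n)"
  by (simp add: xs_def)

lemma fw_xs: "\<beta> \<in> {0..1} \<Longrightarrow> farey_word \<beta> n (xs \<beta> n) = \<beta>"
proof (induction n)
  case 0
  then show ?case by (simp add: xs_def)
next
  case (Suc n)
  have "farey_word \<beta> (Suc n) (xs \<beta> (Suc n)) = farey_word \<beta> n (farey_branch (farey_digit \<beta> (Suc n)) (farey_T (xs \<beta> n)))"
    by (simp add: xs_Suc)
  also have "farey_branch (farey_digit \<beta> (Suc n)) (farey_T (xs \<beta> n)) = xs \<beta> n"
    unfolding digit_xs by (rule T_props(2)[OF xs_range[OF Suc.prems]])
  finally show ?case using Suc by simp
qed

lemma P_Suc: "\<beta> \<in> {0..1} \<Longrightarrow> QQ \<beta> (Suc n) (xs \<beta> (Suc n)) = (1 + farey_T (xs \<beta> n)) * QQ \<beta> n (xs \<beta> n)"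
proof -
  assume b: "\<beta> \<in> {0..1}"
  have "farey_branch (farey_digit \<beta> (Suc n)) (farey_T (xs \<beta> n)) = xs \<beta> n"
    unfolding digit_xs by (rule T_props(2)[OF xs_range[OF b]])
  then show ?thesis by (simp add: xs_Suc)
qed

lemma ln_le_powr: "0 < (D::real) \<Longrightarrow> 0 < e \<Longrightarrow> ln D \<le> D powr e / e"
proof -
  assume D: "0 < D" and e: "0 < e"
  have "ln (D powr e) \<le> D powr e - 1" using D by (intro ln_le_minus_one) simp
  then have "e * ln D \<le> D powr e" using D by (simp add: ln_powr)
  then show ?thesis using e by (simp add: field_simps)
qed

lemma A_bound:
  assumes al: "0 < \<alpha>" "\<alpha> < 1" and et: "0 < \<eta>" and b: "\<beta> \<in> {0..1}"
    and th: "0 < \<theta>" and xA: "x \<in> A_set \<beta> \<alpha> \<eta> n" and thx: "\<theta> \<le> x"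
  shows "\<bar>x - xs \<beta> n\<bar> \<le> (\<theta> powr (\<alpha> - 2) / ((1 - \<alpha>) * \<eta>) * QQ \<beta> n 1 powr (\<alpha> - 1)) powr (1 / \<alpha>)"
proof -
  define D where "D = QQ \<beta> n 1"
  define a where "a = QQ \<beta> n x"
  define bb where "bb = QQ \<beta> n (xs \<beta> n)"
  define u where "u = \<bar>x - xs \<beta> n\<bar>"
  define M where "M = \<theta> powr (\<alpha> - 2) / ((1 - \<alpha>) * \<eta>)"
  have x01: "x \<in> {0..1}" using xA by (simp add: A_set_def)
  have xn01: "xs \<beta> n \<in> {0..1}" using xs_range[OF b] .
  have D1: "D \<ge> real n + 1" using QQ_one unfolding D_def .
  have Dpos: "D > 0" using D1 by linarith
  have apos: "a \<ge> 1" unfolding a_def using x01 by (intro QQ_ge1) simp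
  have bpos: "bb \<ge> 1" unfolding bb_def using xn01 by (intro QQ_ge1) simp
  have bD: "bb \<le> D" unfolding bb_def D_def using QQ_le1[OF xn01] .
  have aD: "D * \<theta> \<le> a"
  proof -
    have "D * \<theta> \<le> D * x" using thx Dpos by simp
    also have "\<dots> \<le> a" unfolding a_def D_def using QQ_lin[OF x01] .
    finally show ?thesis .
  qed
  have Dth: "D * \<theta> > 0" using Dpos th by simp
  show ?thesis
  proof (cases "u = 0")
    case True
    then show ?thesis unfolding u_def by simp
  next
    case False
    then have upos: "u > 0" unfolding u_def by simp
    obtain Dv where Dv: "(farey_word \<beta> n has_real_derivative Dv) (at x)" "\<bar>Dv\<bar> = 1 / a^2"
      using fw_deriv[OF x01] unfolding a_def by blast
    have der: "deriv (farey_word \<beta> n) x = Dv" using DERIV_imp_deriv[OF Dv(1)] .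
    have dist: "\<bar>farey_word \<beta> n x - \<beta>\<bar> = u / (a * bb)"
      using fw_dist[OF x01 xn01, of \<beta> n] fw_xs[OF b, of n] unfolding u_def a_def bb_def by simp
    have ne: "farey_word \<beta> n x \<noteq> \<beta>" using dist upos apos bpos by auto
    define w where "w = 1 / a^2 * (u / (a * bb)) powr (- \<alpha>)"
    have vt: "v_tail \<beta> \<alpha> n x = ereal w"
      unfolding v_tail_def v_pot_def w_def using ne der Dv(2) dist by simp
    have main: "\<eta> < ln (real n) * w"
      using xA unfolding A_set_def by (simp add: vt)
    have wpos: "w \<ge> 0" unfolding w_def by simp
    have lnpos: "ln (real n) > 0"
    proof (rule ccontr)
      assume "\<not> ln (real n) > 0"
      then have "ln (real n) * w \<le> 0" using wpos by (simp add: mult_nonpos_nonneg)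
      then show False using main et by linarith
    qed
    then have n1: "real n > 1" using ln_gt_zero_iff by (cases "n = 0") auto
    have lnD: "ln (real n) \<le> D powr (1 - \<alpha>) / (1 - \<alpha>)"
    proof -
      have "ln (real n) \<le> ln D" using n1 D1 by simp
      also have "\<dots> \<le> D powr (1 - \<alpha>) / (1 - \<alpha>)" using Dpos al by (intro ln_le_powr) auto
      finally show ?thesis .
    qed
    have w_eq: "w = a powr (\<alpha> - 2) * bb powr \<alpha> * u powr (- \<alpha>)"
    proof -
      have "(u / (a * bb)) powr (- \<alpha>) = u powr (- \<alpha>) * (a powr \<alpha> * bb powr \<alpha>)"
        using upos apos bpos by (simp add: powr_divide powr_mult powr_minus field_simps)
      moreover have "1 / a^2 * a powr \<alpha> = a powr (\<alpha> - 2)"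
      proof -
        have "a powr (\<alpha> - 2) = a powr \<alpha> / a powr 2" by (rule powr_diff)
        also have "a powr 2 = a^2" using apos by (simp add: powr_numeral)
        finally show ?thesis by simp
      qed
      ultimately show ?thesis unfolding w_def by (metis mult.assoc mult.commute mult.left_commute)
    qed
    have w_le: "w \<le> \<theta> powr (\<alpha> - 2) * D powr (2 * \<alpha> - 2) * u powr (- \<alpha>)"
    proof -
      have "a powr (\<alpha> - 2) \<le> (D * \<theta>) powr (\<alpha> - 2)"
        using aD Dth al by (intro powr_mono2') auto
      moreover have "bb powr \<alpha> \<le> D powr \<alpha>" using bD bpos al by (intro powr_mono2) auto
      ultimately have "w \<le> (D * \<theta>) powr (\<alpha> - 2) * D powr \<alpha> * u powr (- \<alpha>)"
        unfolding w_eq by (intro mult_right_mono mult_mono) auto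
      also have "(D * \<theta>) powr (\<alpha> - 2) * D powr \<alpha> = \<theta> powr (\<alpha> - 2) * D powr (2 * \<alpha> - 2)"
        using Dpos th by (simp add: powr_mult powr_add[symmetric] algebra_simps)
      finally show ?thesis by simp
    qed
    have "\<eta> < D powr (1 - \<alpha>) / (1 - \<alpha>) * (\<theta> powr (\<alpha> - 2) * D powr (2 * \<alpha> - 2) * u powr (- \<alpha>))"
    proof -
      have "ln (real n) * w \<le> D powr (1 - \<alpha>) / (1 - \<alpha>) * (\<theta> powr (\<alpha> - 2) * D powr (2 * \<alpha> - 2) * u powr (- \<alpha>))"
        using lnD w_le wpos lnpos by (intro mult_mono) auto
      then show ?thesis using main by linarith
    qed
    also have "\<dots> = \<eta> * (M * D powr (\<alpha> - 1)) / u powr \<alpha>"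
    proof -
      have "D powr (1 - \<alpha>) * D powr (2 * \<alpha> - 2) = D powr (\<alpha> - 1)"
        using Dpos by (simp add: powr_add[symmetric])
      then show ?thesis unfolding M_def using al et upos
        by (simp add: powr_minus field_simps)
    qed
    finally have "\<eta> * u powr \<alpha> < \<eta> * (M * D powr (\<alpha> - 1))"
      using upos by (simp add: field_simps)
    then have ul: "u powr \<alpha> < M * D powr (\<alpha> - 1)" using et by simp
    have "u = (u powr \<alpha>) powr (1 / \<alpha>)" using upos al by (simp add: powr_powr)
    also have "\<dots> \<le> (M * D powr (\<alpha> - 1)) powr (1 / \<alpha>)"
      using ul al by (intro powr_mono2) auto
    finally show ?thesis unfolding u_def M_def D_def .
  qed
qed

lemma good_summable:
  fixes P :: "nat \<Rightarrow> real"
  assumes Ppos: "\<And>k. 0 < P k" and Pmono: "\<And>k. P k \<le> P (Suc k)"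
    and Pgood: "\<And>k. G k \<Longrightarrow> (1 + \<theta>) * P k \<le> P (Suc k)"
    and th: "0 < \<theta>" and sg: "0 < \<sigma>"
  shows "summable (\<lambda>k. if G k then P k powr (- \<sigma>) else 0)"
proof -
  define g where "g = (\<lambda>k. if G k then P k powr (- \<sigma>) else 0)"
  define r where "r = (1 + \<theta>) powr (- \<sigma>)"
  have r1: "r < 1" unfolding r_def using th sg by (intro powr_less_one) auto
  have r0: "0 < r" unfolding r_def using th by simp
  define K where "K = 1 / (1 - r)"
  have K0: "K > 0" unfolding K_def using r1 by simp
  have KK: "1 + K * r = K" unfolding K_def using r1 by (simp add: field_simps)
  have claim: "(\<Sum>k<m. g k) + K * P m powr (- \<sigma>) \<le> K * P 0 powr (- \<sigma>)" for m
  proof (induction m)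
    case 0
    then show ?case by simp
  next
    case (Suc m)
    show ?case
    proof (cases "G m")
      case True
      have "P (Suc m) powr (- \<sigma>) \<le> ((1 + \<theta>) * P m) powr (- \<sigma>)"
        using Pgood[OF True] Ppos[of m] th sg by (intro powr_mono2') auto
      also have "\<dots> = r * P m powr (- \<sigma>)"
        unfolding r_def using th Ppos[of m] by (simp add: powr_mult)
      finally have "K * P (Suc m) powr (- \<sigma>) \<le> K * (r * P m powr (- \<sigma>))"
        using K0 by simp
      then have "g m + K * P (Suc m) powr (- \<sigma>) \<le> (1 + K * r) * P m powr (- \<sigma>)"
        using True unfolding g_def by (simp add: algebra_simps)
      then show ?thesis using Suc.IH KK by simp
    next
      case False
      have "P (Suc m) powr (- \<sigma>) \<le> P m powr (- \<sigma>)"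
        using Pmono[of m] Ppos[of m] sg by (intro powr_mono2') auto
      then have "K * P (Suc m) powr (- \<sigma>) \<le> K * P m powr (- \<sigma>)" using K0 by simp
      then show ?thesis using Suc.IH False unfolding g_def by simp
    qed
  qed
  have "summable g"
  proof (rule summableI_nonneg_bounded)
    show "0 \<le> g n" for n unfolding g_def by simp
    show "(\<Sum>i<n. g i) \<le> K * P 0 powr (- \<sigma>)" for n
      using claim[of n] K0 by (smt (verit) powr_ge_zero mult_nonneg_nonneg)
  qed
  then show ?thesis unfolding g_def .
qed

lemma R_tendsto:
  assumes "0 < \<alpha>" "\<alpha> < 1" "0 < M"
  shows "(\<lambda>n. (M * (1 + real n) powr (\<alpha> - 1)) powr (1 / \<alpha>)) \<longlonglongrightarrow> 0"
proof -
  have f: "filterlim (\<lambda>n. 1 + real n) at_top sequentially"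
    by (rule filterlim_tendsto_add_at_top[OF tendsto_const filterlim_real_sequentially])
  have "(\<lambda>n. (1 + real n) powr (\<alpha> - 1)) \<longlonglongrightarrow> 0"
    using assms by (intro tendsto_neg_powr f) auto
  then have "(\<lambda>n. M * (1 + real n) powr (\<alpha> - 1)) \<longlonglongrightarrow> M * 0"
    by (intro tendsto_mult tendsto_const)
  then have t: "(\<lambda>n. M * (1 + real n) powr (\<alpha> - 1)) \<longlonglongrightarrow> 0" by simp
  show ?thesis
    using assms by (intro tendsto_zero_powrI[OF t tendsto_const]) (auto intro!: always_eventually)
qed

lemma cover_exists:
  assumes al: "0 < \<alpha>" "\<alpha> < 1" and et: "0 < \<eta>" and b: "\<beta> \<in> {0..1}"
    and s: "0 < s" and dl: "0 < \<delta>" and e: "0 < e"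
  shows "\<exists>U. (\<Inter>N. \<Union>n\<in>{N..}. A_set \<beta> \<alpha> \<eta> n) \<subseteq> (\<Union>i. U i)
     \<and> (\<forall>i. bounded (U i) \<and> diameter (U i) \<le> \<delta>) \<and> (\<Sum>i. hd_term s (U i)) \<le> ennreal e"
proof -
  define \<theta> where "\<theta> = min (1/4) (min (\<delta>/2) ((e/4) powr (1/s) / 2))"
  have th0: "0 < \<theta>" unfolding \<theta>_def using dl e by simp
  have thd: "2 * \<theta> \<le> \<delta>" unfolding \<theta>_def by simp
  have th4: "\<theta> \<le> 1/4" unfolding \<theta>_def by simp
  have ths: "(2 * \<theta>) powr s \<le> e / 4"
  proof -
    have "2 * \<theta> \<le> (e/4) powr (1/s)" unfolding \<theta>_def by simp
    then have "(2 * \<theta>) powr s \<le> ((e/4) powr (1/s)) powr s"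
      using th0 s by (intro powr_mono2) auto
    also have "\<dots> = e / 4" using s e by (simp add: powr_powr)
    finally show ?thesis .
  qed
  define M where "M = \<theta> powr (\<alpha> - 2) / ((1 - \<alpha>) * \<eta>)"
  have M0: "M > 0" unfolding M_def using th0 al et by simp
  define R where "R = (\<lambda>k. (M * QQ \<beta> k 1 powr (\<alpha> - 1)) powr (1 / \<alpha>))"
  define P where "P = (\<lambda>k. QQ \<beta> k (xs \<beta> k))"
  define G where "G = (\<lambda>k. \<theta> < xs \<beta> k \<and> xs \<beta> k < 1 - \<theta>)"
  define \<sigma> where "\<sigma> = (1 - \<alpha>) * s / \<alpha>"
  have sg: "\<sigma> > 0" unfolding \<sigma>_def using al s by simp
  define g where "g = (\<lambda>k. if G k then P k powr (- \<sigma>) else 0)"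
  have P1: "P k \<ge> 1" for k unfolding P_def using xs_range[OF b] by (intro QQ_ge1) auto
  have Pmono: "P k \<le> P (Suc k)" for k
  proof -
    have "farey_T (xs \<beta> k) \<ge> 0" using T_props(1)[OF xs_range[OF b]] by simp
    then show ?thesis unfolding P_def P_Suc[OF b] using P1[of k] unfolding P_def
      by (simp add: mult_le_cancel_right1)
  qed
  have Pgood: "(1 + \<theta>) * P k \<le> P (Suc k)" if "G k" for k
  proof -
    have "farey_T (xs \<beta> k) \<ge> \<theta>" using that th0 unfolding G_def
      by (intro T_props(3)[OF xs_range[OF b]]) auto
    then show ?thesis unfolding P_def P_Suc[OF b] using P1[of k] unfolding P_def
      by (simp add: mult_right_mono)
  qed
  have gsum: "summable g" unfolding g_def
  proof (rule good_summable[where P=P and G=G and \<theta>=\<theta> and \<sigma>=\<sigma>])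
    show "0 < P k" for k using P1[of k] by linarith
  qed (use Pmono Pgood th0 sg in auto)
  define Cg where "Cg = 2 powr s * M powr (s / \<alpha>)"
  have Cg0: "Cg > 0" unfolding Cg_def using M0 by simp
  have R0: "R k \<ge> 0" for k unfolding R_def by simp
  have tb: "(2 * R k) powr s \<le> Cg * P k powr (- \<sigma>)" for k
  proof -
    have D0: "QQ \<beta> k 1 > 0" using QQ_ge1[of 1 \<beta> k] by simp
    have "(2 * R k) powr s = 2 powr s * M powr (s / \<alpha>) * QQ \<beta> k 1 powr (- \<sigma>)"
      unfolding R_def \<sigma>_def using M0 D0 al
      by (simp add: powr_mult powr_powr algebra_simps) (metis minus_diff_eq minus_divide_left)
    also have "\<dots> \<le> 2 powr s * M powr (s / \<alpha>) * P k powr (- \<sigma>)"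
    proof -
      have "QQ \<beta> k 1 powr (- \<sigma>) \<le> P k powr (- \<sigma>)"
        unfolding P_def using sg P1[of k] QQ_le1[OF xs_range[OF b]] unfolding P_def
        by (intro powr_mono2') auto
      then show ?thesis by (intro mult_left_mono) auto
    qed
    finally show ?thesis unfolding Cg_def .
  qed
  obtain N1 where N1: "\<forall>n\<ge>N1. norm (\<Sum>i. Cg * g (i + n)) < e / 2"
    using suminf_exist_split[of "e/2" "\<lambda>k. Cg * g k"] e summable_mult[OF gsum] by auto
  have "eventually (\<lambda>n. (M * (1 + real n) powr (\<alpha> - 1)) powr (1 / \<alpha>) < \<theta>) sequentially"
    using R_tendsto[OF al M0] th0 by (rule order_tendstoD(2))
  then obtain N2 where N2: "\<And>n. n \<ge> N2 \<Longrightarrow> (M * (1 + real n) powr (\<alpha> - 1)) powr (1 / \<alpha>) < \<theta>"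
    by (auto simp: eventually_sequentially)
  have Rth: "R n \<le> \<theta>" if "n \<ge> N2" for n
  proof -
    have "QQ \<beta> n 1 powr (\<alpha> - 1) \<le> (1 + real n) powr (\<alpha> - 1)"
      using QQ_one[where \<beta>=\<beta> and n=n] al by (intro powr_mono2') auto
    then have "R n \<le> (M * (1 + real n) powr (\<alpha> - 1)) powr (1 / \<alpha>)"
      unfolding R_def using M0 al by (intro powr_mono2) (auto intro: mult_left_mono)
    then show ?thesis using N2[OF that] by simp
  qed
  define N where "N = max N1 N2"
  define U where "U = (\<lambda>i. if i = 0 then {0..2*\<theta>} else if i = 1 then {1 - 2*\<theta>..1}
      else if N \<le> i - 2 \<and> G (i - 2) then {xs \<beta> (i - 2) - R (i - 2) .. xs \<beta> (i - 2) + R (i - 2)} else {})"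
  have NN2: "N2 \<le> N" and NN1: "N1 \<le> N" unfolding N_def by auto
  have cov: "(\<Inter>N. \<Union>n\<in>{N..}. A_set \<beta> \<alpha> \<eta> n) \<subseteq> (\<Union>i. U i)"
  proof
    fix x assume "x \<in> (\<Inter>N. \<Union>n\<in>{N..}. A_set \<beta> \<alpha> \<eta> n)"
    then have "x \<in> (\<Union>n\<in>{N..}. A_set \<beta> \<alpha> \<eta> n)" by blast
    then obtain n where n: "n \<ge> N" "x \<in> A_set \<beta> \<alpha> \<eta> n" by auto
    have x01: "0 \<le> x" "x \<le> 1" using n(2) by (auto simp: A_set_def)
    show "x \<in> (\<Union>i. U i)"
    proof (cases "x \<le> \<theta>")
      case True
      then have "x \<in> U 0" using x01 th0 by (simp add: U_def)
      then show ?thesis by blast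
    next
      case False
      have xb: "\<bar>x - xs \<beta> n\<bar> \<le> R n"
        using A_bound[OF al et b th0 n(2)] False unfolding R_def M_def by simp
      have Rn: "R n \<le> \<theta>" using Rth NN2 n(1) by simp
      consider "xs \<beta> n \<le> \<theta>" | "xs \<beta> n \<ge> 1 - \<theta>" | "G n" unfolding G_def by linarith
      then show ?thesis
      proof cases
        case 1
        then have "x \<in> U 0" using x01 xb Rn by (simp add: U_def)
        then show ?thesis by blast
      next
        case 2
        then have "x \<in> U 1" using x01 xb Rn by (simp add: U_def)
        then show ?thesis by blast
      next
        case 3
        then have "x \<in> U (Suc (Suc n))" using xb n(1) by (simp add: U_def abs_le_iff)
        then show ?thesis by blast
      qed
    qed
  qed
  have bd: "bounded (U i) \<and> diameter (U i) \<le> \<delta>" for i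
  proof -
    consider "i = 0" | "i = 1" | "i \<noteq> 0" "i \<noteq> 1" "N \<le> i - 2 \<and> G (i - 2)"
      | "i \<noteq> 0" "i \<noteq> 1" "\<not> (N \<le> i - 2 \<and> G (i - 2))" by blast
    then show ?thesis
    proof cases
      case 1
      then have "U i = {0..2*\<theta>}" unfolding U_def by simp
      then show ?thesis using thd th0 by simp
    next
      case 2
      then have "U i = {1 - 2*\<theta>..1}" unfolding U_def by simp
      then show ?thesis using thd th0 by simp
    next
      case 3
      then have "U i = {xs \<beta> (i - 2) - R (i - 2) .. xs \<beta> (i - 2) + R (i - 2)}" unfolding U_def by simp
      moreover have "R (i - 2) \<le> \<theta>" using Rth NN2 3 by simp
      ultimately show ?thesis using thd th0 R0[of "i - 2"] by simp
    next
      case 4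
      then have "U i = {}" unfolding U_def by auto
      then show ?thesis using dl by simp
    qed
  qed
  define t where "t = (\<lambda>k. if N \<le> k \<and> G k then (2 * R k) powr s else 0)"
  define h where "h = (\<lambda>i. if i = 0 \<or> i = 1 then (2 * \<theta>) powr s else t (i - 2))"
  have h0: "h i \<ge> 0" for i unfolding h_def t_def by simp
  have hd: "hd_term s (U i) \<le> ennreal (h i)" for i
  proof -
    have s0: "s \<noteq> 0" using s by simp
    consider "i = 0" | "i = 1" | "i \<noteq> 0" "i \<noteq> 1" "N \<le> i - 2 \<and> G (i - 2)"
      | "i \<noteq> 0" "i \<noteq> 1" "\<not> (N \<le> i - 2 \<and> G (i - 2))" by blast
    then show ?thesis
    proof cases
      case 1
      then have "U i = {0..2*\<theta>}" "h i = (2 * \<theta>) powr s" unfolding U_def h_def by simp_all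
      then show ?thesis using th0 s0 by (simp add: hd_term_def)
    next
      case 2
      then have "U i = {1 - 2*\<theta>..1}" "h i = (2 * \<theta>) powr s" unfolding U_def h_def by simp_all
      then show ?thesis using th0 s0 by (simp add: hd_term_def)
    next
      case 3
      then have "U i = {xs \<beta> (i - 2) - R (i - 2) .. xs \<beta> (i - 2) + R (i - 2)}"
        "h i = (2 * R (i - 2)) powr s" unfolding U_def h_def t_def by simp_all
      then show ?thesis using R0[of "i - 2"] s0 by (simp add: hd_term_def)
    next
      case 4
      then have "U i = {}" unfolding U_def by auto
      then show ?thesis by (simp add: hd_term_def)
    qed
  qed
  define gN where "gN = (\<lambda>k. if N \<le> k then Cg * g k else 0)"
  define S0 where "S0 = (\<Sum>i. Cg * g (i + N))"
  have g0: "g k \<ge> 0" for k unfolding g_def by simp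
  have gNs: "gN sums S0"
  proof -
    have "summable (\<lambda>i. Cg * g (i + N))"
      using summable_mult[OF gsum, of Cg] by (subst summable_iff_shift[where k=N]) simp
    then have "(\<lambda>i. gN (i + N)) sums S0" unfolding S0_def gN_def by (simp add: summable_sums)
    then have "gN sums (S0 + (\<Sum>i<N. gN i))" by (simp add: sums_iff_shift)
    moreover have "(\<Sum>i<N. gN i) = 0" unfolding gN_def by simp
    ultimately show ?thesis by simp
  qed
  have S0e: "S0 < e / 2" using N1 NN1 unfolding S0_def
    by (metis abs_le_D1 le_less_trans order.refl real_norm_def)
  have tgN: "t k \<le> gN k" for k
  proof (cases "N \<le> k \<and> G k")
    case True
    then have "t k = (2 * R k) powr s" "gN k = Cg * P k powr (- \<sigma>)"
      unfolding t_def gN_def g_def by auto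
    then show ?thesis using tb[of k] by simp
  next
    case False
    then have "t k = 0" unfolding t_def by auto
    moreover have "gN k \<ge> 0" unfolding gN_def using Cg0 g0[of k] by simp
    ultimately show ?thesis by simp
  qed
  have t0: "t k \<ge> 0" for k unfolding t_def by simp
  have tsum: "summable t"
  proof (rule summable_comparison_test'[where g=gN and N=0])
    show "summable gN" using gNs by (rule sums_summable)
    show "norm (t n) \<le> gN n" for n using tgN[of n] t0[of n] by simp
  qed
  have tle: "suminf t \<le> S0"
    using suminf_le[OF tgN tsum sums_summable[OF gNs]] sums_unique[OF gNs] by simp
  have hs: "h sums (suminf t + (2 * \<theta>) powr s + (2 * \<theta>) powr s)"
  proof -
    have "(\<lambda>n. h (Suc (Suc n))) sums suminf t"
      using tsum unfolding h_def by (simp add: summable_sums)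
    then have "(\<lambda>n. h (Suc n)) sums (suminf t + h (Suc 0))" by (subst (asm) sums_Suc_iff)
    then have "h sums (suminf t + h (Suc 0) + h 0)" by (subst (asm) sums_Suc_iff)
    then show ?thesis unfolding h_def by simp
  qed
  have "(\<Sum>i. hd_term s (U i)) \<le> (\<Sum>i. ennreal (h i))"
    by (intro suminf_le hd) auto
  also have "\<dots> = ennreal (suminf t + (2 * \<theta>) powr s + (2 * \<theta>) powr s)"
    by (rule suminf_ennreal_eq[OF h0 hs])
  also have "\<dots> \<le> ennreal e"
    using tle S0e ths by (intro ennreal_leI) linarith
  finally have sm: "(\<Sum>i. hd_term s (U i)) \<le> ennreal e" .
  show ?thesis using cov bd sm by blast
qed

lemma measure_zero:
  assumes al: "0 < \<alpha>" "\<alpha> < 1" and et: "0 < \<eta>" and b: "\<beta> \<in> {0..1}" and s: "0 < s"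
  shows "hausdorff_measure s (\<Inter>N. \<Union>n\<in>{N..}. A_set \<beta> \<alpha> \<eta> n) = 0"
proof -
  let ?L = "\<Inter>N. \<Union>n\<in>{N..}. A_set \<beta> \<alpha> \<eta> n"
  have z: "hausdorff_pre s \<delta> ?L = 0" if "\<delta> \<in> {0<..}" for \<delta>
  proof -
    have dl: "0 < \<delta>" using that by simp
    have "hausdorff_pre s \<delta> ?L \<le> 0"
    proof (rule ennreal_le_epsilon)
      fix e :: real assume e: "0 < e"
      obtain U where U: "?L \<subseteq> (\<Union>i. U i)" "\<forall>i. bounded (U i) \<and> diameter (U i) \<le> \<delta>"
        "(\<Sum>i. hd_term s (U i)) \<le> ennreal e"
        using cover_exists[OF al et b s dl e] by blast
      have "hausdorff_pre s \<delta> ?L \<le> (\<Sum>i. hd_term s (U i))"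
        unfolding hausdorff_pre_def using U(1,2) by (intro INF_lower) auto
      then show "hausdorff_pre s \<delta> ?L \<le> 0 + ennreal e" using U(3) by simp
    qed
    then show ?thesis by simp
  qed
  show ?thesis unfolding hausdorff_measure_def using z by simp
qed

theorem lemma4p18:
  fixes \<alpha> \<beta> \<eta> :: real
  assumes "0 < \<alpha>" and "\<alpha> < 1"
    and "0 \<le> \<beta>" and "\<beta> \<le> 1" and "\<beta> \<notin> \<rat>"
    and "0 < \<eta>"
  shows "hausdorff_dim (\<Inter>N. \<Union>n\<in>{N..}. A_set \<beta> \<alpha> \<eta> n) = 0"
proof -
  let ?L = "\<Inter>N. \<Union>n\<in>{N..}. A_set \<beta> \<alpha> \<eta> n"
  define S where "S = {s. 0 \<le> s \<and> hausdorff_measure s ?L = 0}"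
  have b: "\<beta> \<in> {0..1}" using assms by simp
  have inS: "s \<in> S" if "0 < s" for s
    unfolding S_def using that measure_zero[OF assms(1,2) assms(6) b that] by simp
  have bdd: "bdd_below S" unfolding S_def by (auto intro: bdd_belowI[of _ 0])
  have ne: "S \<noteq> {}" using inS[of 1] by auto
  have ge: "Inf S \<ge> 0" using ne by (intro cInf_greatest) (auto simp: S_def)
  have le: "Inf S \<le> 0"
  proof (rule ccontr)
    assume "\<not> Inf S \<le> 0"
    then have p: "Inf S > 0" by simp
    then have "Inf S \<le> Inf S / 2" using inS[of "Inf S / 2"] bdd by (intro cInf_lower) auto
    then show False using p by simp
  qed
  show ?thesis unfolding hausdorff_dim_def S_def[symmetric] using ge le by simp
qed

end
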